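(* Every full triangle functor $F:\mathcal A\to\mathcal B$ between triangulated categories is objective.
   Context: $F$ is objective if every morphism $f$ in $\mathcal A$ with $F(f)=0$ factors through an object $K$ of $\mathcal A$ with $F(K)=0$. A triangle functor is a pair $(F,\xi)$ with $F$ additive and $\xi:F[1]\to[1]F$ a natural isomorphism such that $F$ sends distinguished triangles $(X,Y,Z,u,v,w)$ to distinguished triangles $(F(X),F(Y),F(Z),F(u),F(v),\xi_XF(w))$. *)

theory Defs
  imports Main
begin

text \<open>A category with additive structure, a shift (suspension) and a class of
distinguished triangles.  Composition convention: cmp C g f is g after f.\<close>

record ('o,'m) tricat =
  obj   :: "'o set"
  arr   :: "'m set"
  src   :: "'m \<Rightarrow> 'o"
  tgt   :: "'m \<Rightarrow> 'o"
  cmp   :: "'m \<Rightarrow> 'm \<Rightarrow> 'm"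
  idn   :: "'o \<Rightarrow> 'm"
  adr   :: "'m \<Rightarrow> 'm \<Rightarrow> 'm"
  ngt   :: "'m \<Rightarrow> 'm"
  zro   :: "'o \<Rightarrow> 'o \<Rightarrow> 'm"
  sh_o  :: "'o \<Rightarrow> 'o"
  sh_a  :: "'m \<Rightarrow> 'm"
  dtri  :: "('o \<times> 'o \<times> 'o \<times> 'm \<times> 'm \<times> 'm) set"

definition hom :: "('o,'m) tricat \<Rightarrow> 'o \<Rightarrow> 'o \<Rightarrow> 'm set" where
  "hom C X Y = {f \<in> arr C. src C f = X \<and> tgt C f = Y}"

definition is_category :: "('o,'m) tricat \<Rightarrow> bool" where
  "is_category C \<longleftrightarrow>
     (\<forall>f\<in>arr C. src C f \<in> obj C \<and> tgt C f \<in> obj C) \<and>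
     (\<forall>X\<in>obj C. idn C X \<in> hom C X X) \<and>
     (\<forall>X Y Z f g. f \<in> hom C X Y \<longrightarrow> g \<in> hom C Y Z \<longrightarrow> cmp C g f \<in> hom C X Z) \<and>
     (\<forall>X Y f. f \<in> hom C X Y \<longrightarrow> cmp C (idn C Y) f = f \<and> cmp C f (idn C X) = f) \<and>
     (\<forall>W X Y Z f g h. f \<in> hom C W X \<longrightarrow> g \<in> hom C X Y \<longrightarrow> h \<in> hom C Y Z \<longrightarrow>
        cmp C h (cmp C g f) = cmp C (cmp C h g) f)"

definition is_preadditive :: "('o,'m) tricat \<Rightarrow> bool" where
  "is_preadditive C \<longleftrightarrow> is_category C \<and>
     (\<forall>X\<in>obj C. \<forall>Y\<in>obj C.
        zro C X Y \<in> hom C X Y \<and>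
        (\<forall>f\<in>hom C X Y. \<forall>g\<in>hom C X Y. adr C f g \<in> hom C X Y \<and> adr C f g = adr C g f) \<and>
        (\<forall>f\<in>hom C X Y. \<forall>g\<in>hom C X Y. \<forall>h\<in>hom C X Y.
            adr C (adr C f g) h = adr C f (adr C g h)) \<and>
        (\<forall>f\<in>hom C X Y. adr C (zro C X Y) f = f) \<and>
        (\<forall>f\<in>hom C X Y. ngt C f \<in> hom C X Y \<and> adr C f (ngt C f) = zro C X Y)) \<and>
     (\<forall>X Y Z f g g'. f \<in> hom C X Y \<longrightarrow> g \<in> hom C Y Z \<longrightarrow> g' \<in> hom C Y Z \<longrightarrow>
        cmp C (adr C g g') f = adr C (cmp C g f) (cmp C g' f)) \<and>
     (\<forall>X Y Z f f' g. f \<in> hom C X Y \<longrightarrow> f' \<in> hom C X Y \<longrightarrow> g \<in> hom C Y Z \<longrightarrow>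
        cmp C g (adr C f f') = adr C (cmp C g f) (cmp C g f'))"

definition zero_obj :: "('o,'m) tricat \<Rightarrow> 'o \<Rightarrow> bool" where
  "zero_obj C Z \<longleftrightarrow> Z \<in> obj C \<and>
     (\<forall>X\<in>obj C. (\<exists>!f. f \<in> hom C X Z) \<and> (\<exists>!f. f \<in> hom C Z X))"

definition is_additive :: "('o,'m) tricat \<Rightarrow> bool" where
  "is_additive C \<longleftrightarrow> is_preadditive C \<and> (\<exists>Z. zero_obj C Z) \<and>
     (\<forall>X\<in>obj C. \<forall>Y\<in>obj C. \<exists>P i1 i2 p1 p2.
        i1 \<in> hom C X P \<and> i2 \<in> hom C Y P \<and> p1 \<in> hom C P X \<and> p2 \<in> hom C P Y \<and>
        cmp C p1 i1 = idn C X \<and> cmp C p2 i2 = idn C Y \<and>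
        cmp C p2 i1 = zro C X Y \<and> cmp C p1 i2 = zro C Y X \<and>
        adr C (cmp C i1 p1) (cmp C i2 p2) = idn C P)"

definition is_iso :: "('o,'m) tricat \<Rightarrow> 'o \<Rightarrow> 'o \<Rightarrow> 'm \<Rightarrow> bool" where
  "is_iso C X Y f \<longleftrightarrow> f \<in> hom C X Y \<and>
     (\<exists>g\<in>hom C Y X. cmp C g f = idn C X \<and> cmp C f g = idn C Y)"

definition shift_ok :: "('o,'m) tricat \<Rightarrow> bool" where
  "shift_ok C \<longleftrightarrow>
     bij_betw (sh_o C) (obj C) (obj C) \<and>
     (\<forall>X\<in>obj C. \<forall>Y\<in>obj C. bij_betw (sh_a C) (hom C X Y) (hom C (sh_o C X) (sh_o C Y))) \<and>
     (\<forall>X\<in>obj C. sh_a C (idn C X) = idn C (sh_o C X)) \<and>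
     (\<forall>X Y Z f g. f \<in> hom C X Y \<longrightarrow> g \<in> hom C Y Z \<longrightarrow>
        sh_a C (cmp C g f) = cmp C (sh_a C g) (sh_a C f)) \<and>
     (\<forall>X Y f g. f \<in> hom C X Y \<longrightarrow> g \<in> hom C X Y \<longrightarrow>
        sh_a C (adr C f g) = adr C (sh_a C f) (sh_a C g))"

definition is_tri :: "('o,'m) tricat \<Rightarrow> 'o \<Rightarrow> 'o \<Rightarrow> 'o \<Rightarrow> 'm \<Rightarrow> 'm \<Rightarrow> 'm \<Rightarrow> bool" where
  "is_tri C X Y Z u v w \<longleftrightarrow> X \<in> obj C \<and> Y \<in> obj C \<and> Z \<in> obj C \<and>
     u \<in> hom C X Y \<and> v \<in> hom C Y Z \<and> w \<in> hom C Z (sh_o C X)"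

definition tri_morph :: "('o,'m) tricat \<Rightarrow> 'o \<Rightarrow> 'o \<Rightarrow> 'o \<Rightarrow> 'm \<Rightarrow> 'm \<Rightarrow> 'm
    \<Rightarrow> 'o \<Rightarrow> 'o \<Rightarrow> 'o \<Rightarrow> 'm \<Rightarrow> 'm \<Rightarrow> 'm \<Rightarrow> 'm \<Rightarrow> 'm \<Rightarrow> 'm \<Rightarrow> bool" where
  "tri_morph C X Y Z u v w X' Y' Z' u' v' w' a b c \<longleftrightarrow>
     a \<in> hom C X X' \<and> b \<in> hom C Y Y' \<and> c \<in> hom C Z Z' \<and>
     cmp C u' a = cmp C b u \<and> cmp C v' b = cmp C c v \<and>
     cmp C w' c = cmp C (sh_a C a) w"

definition is_triangulated :: "('o,'m) tricat \<Rightarrow> bool" where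
  "is_triangulated C \<longleftrightarrow> is_additive C \<and> shift_ok C \<and>
     \<comment> \<open>distinguished triangles are triangles\<close>
     (\<forall>X Y Z u v w. (X,Y,Z,u,v,w) \<in> dtri C \<longrightarrow> is_tri C X Y Z u v w) \<and>
     \<comment> \<open>TR1\<close>
     (\<forall>X Y Z u v w X' Y' Z' u' v' w' a b c.
        (X,Y,Z,u,v,w) \<in> dtri C \<longrightarrow> is_tri C X' Y' Z' u' v' w' \<longrightarrow>
        tri_morph C X Y Z u v w X' Y' Z' u' v' w' a b c \<longrightarrow>
        is_iso C X X' a \<longrightarrow> is_iso C Y Y' b \<longrightarrow> is_iso C Z Z' c \<longrightarrow>
        (X',Y',Z',u',v',w') \<in> dtri C) \<and>
     (\<forall>X\<in>obj C. \<forall>Z. zero_obj C Z \<longrightarrow>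
        (X, X, Z, idn C X, zro C X Z, zro C Z (sh_o C X)) \<in> dtri C) \<and>
     (\<forall>X Y u. X \<in> obj C \<longrightarrow> Y \<in> obj C \<longrightarrow> u \<in> hom C X Y \<longrightarrow>
        (\<exists>Z v w. (X,Y,Z,u,v,w) \<in> dtri C)) \<and>
     \<comment> \<open>TR2 (rotation)\<close>
     (\<forall>X Y Z u v w. is_tri C X Y Z u v w \<longrightarrow>
        ((X,Y,Z,u,v,w) \<in> dtri C \<longleftrightarrow> (Y, Z, sh_o C X, v, w, ngt C (sh_a C u)) \<in> dtri C)) \<and>
     \<comment> \<open>TR3\<close>
     (\<forall>X Y Z u v w X' Y' Z' u' v' w' a b.
        (X,Y,Z,u,v,w) \<in> dtri C \<longrightarrow> (X',Y',Z',u',v',w') \<in> dtri C \<longrightarrow>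
        a \<in> hom C X X' \<longrightarrow> b \<in> hom C Y Y' \<longrightarrow> cmp C u' a = cmp C b u \<longrightarrow>
        (\<exists>c. tri_morph C X Y Z u v w X' Y' Z' u' v' w' a b c)) \<and>
     \<comment> \<open>TR4 (octahedral axiom)\<close>
     (\<forall>X Y Z u v Z' j k X' l i Y' m n.
        u \<in> hom C X Y \<longrightarrow> v \<in> hom C Y Z \<longrightarrow>
        (X, Y, Z', u, j, k) \<in> dtri C \<longrightarrow>
        (Y, Z, X', v, l, i) \<in> dtri C \<longrightarrow>
        (X, Z, Y', cmp C v u, m, n) \<in> dtri C \<longrightarrow>
        (\<exists>f g. f \<in> hom C Z' Y' \<and> g \<in> hom C Y' X' \<and>
           (Z', Y', X', f, g, cmp C (sh_a C j) i) \<in> dtri C \<and>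
           cmp C f j = cmp C m v \<and> cmp C n f = k \<and>
           cmp C g m = l \<and> cmp C i g = cmp C (sh_a C u) n))"

definition is_triangle_functor ::
  "('o1,'m1) tricat \<Rightarrow> ('o2,'m2) tricat \<Rightarrow> ('o1 \<Rightarrow> 'o2) \<Rightarrow> ('m1 \<Rightarrow> 'm2) \<Rightarrow> ('o1 \<Rightarrow> 'm2) \<Rightarrow> bool"
where
  "is_triangle_functor A B Fo Fm xi \<longleftrightarrow>
     \<comment> \<open>functor\<close>
     (\<forall>X\<in>obj A. Fo X \<in> obj B) \<and>
     (\<forall>X Y f. f \<in> hom A X Y \<longrightarrow> Fm f \<in> hom B (Fo X) (Fo Y)) \<and>
     (\<forall>X\<in>obj A. Fm (idn A X) = idn B (Fo X)) \<and>
     (\<forall>X Y Z f g. f \<in> hom A X Y \<longrightarrow> g \<in> hom A Y Z \<longrightarrow>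
        Fm (cmp A g f) = cmp B (Fm g) (Fm f)) \<and>
     \<comment> \<open>additive\<close>
     (\<forall>X Y f g. f \<in> hom A X Y \<longrightarrow> g \<in> hom A X Y \<longrightarrow>
        Fm (adr A f g) = adr B (Fm f) (Fm g)) \<and>
     \<comment> \<open>xi : F[1] -> [1]F natural isomorphism\<close>
     (\<forall>X\<in>obj A. is_iso B (Fo (sh_o A X)) (sh_o B (Fo X)) (xi X)) \<and>
     (\<forall>X Y f. f \<in> hom A X Y \<longrightarrow>
        cmp B (xi Y) (Fm (sh_a A f)) = cmp B (sh_a B (Fm f)) (xi X)) \<and>
     \<comment> \<open>preservation of distinguished triangles\<close>
     (\<forall>X Y Z u v w. (X,Y,Z,u,v,w) \<in> dtri A \<longrightarrow>
        (Fo X, Fo Y, Fo Z, Fm u, Fm v, cmp B (xi X) (Fm w)) \<in> dtri B)"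

definition is_full ::
  "('o1,'m1) tricat \<Rightarrow> ('o2,'m2) tricat \<Rightarrow> ('o1 \<Rightarrow> 'o2) \<Rightarrow> ('m1 \<Rightarrow> 'm2) \<Rightarrow> bool" where
  "is_full A B Fo Fm \<longleftrightarrow>
     (\<forall>X\<in>obj A. \<forall>Y\<in>obj A. \<forall>g\<in>hom B (Fo X) (Fo Y). \<exists>f\<in>hom A X Y. Fm f = g)"

definition is_objective ::
  "('o1,'m1) tricat \<Rightarrow> ('o2,'m2) tricat \<Rightarrow> ('o1 \<Rightarrow> 'o2) \<Rightarrow> ('m1 \<Rightarrow> 'm2) \<Rightarrow> bool" where
  "is_objective A B Fo Fm \<longleftrightarrow>
     (\<forall>X Y f. f \<in> hom A X Y \<longrightarrow> Fm f = zro B (Fo X) (Fo Y) \<longrightarrow>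
        (\<exists>K a b. K \<in> obj A \<and> zero_obj B (Fo K) \<and> a \<in> hom A X K \<and> b \<in> hom A K Y \<and>
           f = cmp A b a))"

end

theory Submission imports Defs begin

lemma cat_D:
  assumes "is_category C"
  shows "(\<forall>f\<in>arr C. src C f \<in> obj C \<and> tgt C f \<in> obj C) \<and>
     (\<forall>X\<in>obj C. idn C X \<in> hom C X X) \<and>
     (\<forall>X Y Z f g. f \<in> hom C X Y \<longrightarrow> g \<in> hom C Y Z \<longrightarrow> cmp C g f \<in> hom C X Z) \<and>
     (\<forall>X Y f. f \<in> hom C X Y \<longrightarrow> cmp C (idn C Y) f = f \<and> cmp C f (idn C X) = f) \<and>
     (\<forall>W X Y Z f g h. f \<in> hom C W X \<longrightarrow> g \<in> hom C X Y \<longrightarrow> h \<in> hom C Y Z \<longrightarrow>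
        cmp C h (cmp C g f) = cmp C (cmp C h g) f)"
  using assms unfolding is_category_def .

lemma hom_obj: "is_category C \<Longrightarrow> f \<in> hom C X Y \<Longrightarrow> X \<in> obj C \<and> Y \<in> obj C"
  unfolding is_category_def hom_def by auto
lemma cmp_hom: "is_category C \<Longrightarrow> f \<in> hom C X Y \<Longrightarrow> g \<in> hom C Y Z \<Longrightarrow> cmp C g f \<in> hom C X Z"
  using cat_D by blast
lemma idn_hom: "is_category C \<Longrightarrow> X \<in> obj C \<Longrightarrow> idn C X \<in> hom C X X"
  using cat_D by blast
lemma idn_l: "is_category C \<Longrightarrow> f \<in> hom C X Y \<Longrightarrow> cmp C (idn C Y) f = f"
  using cat_D by blast
lemma idn_r: "is_category C \<Longrightarrow> f \<in> hom C X Y \<Longrightarrow> cmp C f (idn C X) = f"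
  using cat_D by blast
lemma assoc: "is_category C \<Longrightarrow> f \<in> hom C W X \<Longrightarrow> g \<in> hom C X Y \<Longrightarrow> h \<in> hom C Y Z \<Longrightarrow>
   cmp C h (cmp C g f) = cmp C (cmp C h g) f"
  using cat_D by blast

lemma pa_D:
  assumes "is_preadditive C" "X \<in> obj C" "Y \<in> obj C"
  shows "zro C X Y \<in> hom C X Y \<and>
        (\<forall>f\<in>hom C X Y. \<forall>g\<in>hom C X Y. adr C f g \<in> hom C X Y \<and> adr C f g = adr C g f) \<and>
        (\<forall>f\<in>hom C X Y. \<forall>g\<in>hom C X Y. \<forall>h\<in>hom C X Y.
            adr C (adr C f g) h = adr C f (adr C g h)) \<and>
        (\<forall>f\<in>hom C X Y. adr C (zro C X Y) f = f) \<and>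
        (\<forall>f\<in>hom C X Y. ngt C f \<in> hom C X Y \<and> adr C f (ngt C f) = zro C X Y)"
proof -
  have "\<forall>X\<in>obj C. \<forall>Y\<in>obj C.
        zro C X Y \<in> hom C X Y \<and>
        (\<forall>f\<in>hom C X Y. \<forall>g\<in>hom C X Y. adr C f g \<in> hom C X Y \<and> adr C f g = adr C g f) \<and>
        (\<forall>f\<in>hom C X Y. \<forall>g\<in>hom C X Y. \<forall>h\<in>hom C X Y.
            adr C (adr C f g) h = adr C f (adr C g h)) \<and>
        (\<forall>f\<in>hom C X Y. adr C (zro C X Y) f = f) \<and>
        (\<forall>f\<in>hom C X Y. ngt C f \<in> hom C X Y \<and> adr C f (ngt C f) = zro C X Y)"
    using assms(1) unfolding is_preadditive_def by (elim conjE)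
  then show ?thesis using assms(2,3) by blast
qed

lemma pa_cat: "is_preadditive C \<Longrightarrow> is_category C"
  unfolding is_preadditive_def by (elim conjE)

lemma pa_bil:
  assumes "is_preadditive C"
  shows "(\<forall>X Y Z f g g'. f \<in> hom C X Y \<longrightarrow> g \<in> hom C Y Z \<longrightarrow> g' \<in> hom C Y Z \<longrightarrow>
        cmp C (adr C g g') f = adr C (cmp C g f) (cmp C g' f)) \<and>
     (\<forall>X Y Z f f' g. f \<in> hom C X Y \<longrightarrow> f' \<in> hom C X Y \<longrightarrow> g \<in> hom C Y Z \<longrightarrow>
        cmp C g (adr C f f') = adr C (cmp C g f) (cmp C g f'))"
  using assms unfolding is_preadditive_def by (elim conjE) (rule conjI)

context fixes C :: "('o,'m) tricat" and X Y :: 'o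
  assumes P: "is_preadditive C" and X: "X \<in> obj C" and Y: "Y \<in> obj C"
begin
lemma zro_hom: "zro C X Y \<in> hom C X Y" using pa_D[OF P X Y] by blast
lemma adr_hom: "f \<in> hom C X Y \<Longrightarrow> g \<in> hom C X Y \<Longrightarrow> adr C f g \<in> hom C X Y"
  using pa_D[OF P X Y] by blast
lemma adr_comm: "f \<in> hom C X Y \<Longrightarrow> g \<in> hom C X Y \<Longrightarrow> adr C f g = adr C g f"
  using pa_D[OF P X Y] by blast
lemma adr_assoc: "f \<in> hom C X Y \<Longrightarrow> g \<in> hom C X Y \<Longrightarrow> h \<in> hom C X Y \<Longrightarrow>
   adr C (adr C f g) h = adr C f (adr C g h)"
  using pa_D[OF P X Y] by blast
lemma adr_zl: "f \<in> hom C X Y \<Longrightarrow> adr C (zro C X Y) f = f"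
  using pa_D[OF P X Y] by blast
lemma ngt_hom: "f \<in> hom C X Y \<Longrightarrow> ngt C f \<in> hom C X Y"
  using pa_D[OF P X Y] by blast
lemma adr_ngt: "f \<in> hom C X Y \<Longrightarrow> adr C f (ngt C f) = zro C X Y"
  using pa_D[OF P X Y] by blast
lemma adr_zr: "f \<in> hom C X Y \<Longrightarrow> adr C f (zro C X Y) = f"
proof -
  assume f: "f \<in> hom C X Y"
  have "adr C f (zro C X Y) = adr C (zro C X Y) f" using adr_comm[OF f zro_hom] .
  also have "\<dots> = f" using adr_zl[OF f] .
  finally show ?thesis .
qed
lemma cancel: "a \<in> hom C X Y \<Longrightarrow> adr C a a = a \<Longrightarrow> a = zro C X Y"
proof -
  assume a: "a \<in> hom C X Y" and aa: "adr C a a = a"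
  have na: "ngt C a \<in> hom C X Y" using ngt_hom[OF a] .
  have "a = adr C a (zro C X Y)" using adr_zr[OF a] by simp
  also have "\<dots> = adr C a (adr C a (ngt C a))" using adr_ngt[OF a] by simp
  also have "\<dots> = adr C (adr C a a) (ngt C a)" using adr_assoc[OF a a na] by simp
  also have "\<dots> = zro C X Y" using aa adr_ngt[OF a] by simp
  finally show ?thesis .
qed
lemma ngt_uniq: "a \<in> hom C X Y \<Longrightarrow> b \<in> hom C X Y \<Longrightarrow> adr C a b = zro C X Y \<Longrightarrow> b = ngt C a"
proof -
  assume a: "a \<in> hom C X Y" and b: "b \<in> hom C X Y" and ab: "adr C a b = zro C X Y"
  have na: "ngt C a \<in> hom C X Y" using ngt_hom[OF a] .
  have e1: "adr C (ngt C a) a = zro C X Y" using adr_comm[OF na a] adr_ngt[OF a] by simp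
  have "b = adr C (zro C X Y) b" using adr_zl[OF b] by simp
  also have "\<dots> = adr C (adr C (ngt C a) a) b" using e1 by simp
  also have "\<dots> = adr C (ngt C a) (adr C a b)" using adr_assoc[OF na a b] .
  also have "\<dots> = ngt C a" using ab adr_zr[OF na] by simp
  finally show ?thesis .
qed
lemma ngt_ngt: "a \<in> hom C X Y \<Longrightarrow> ngt C (ngt C a) = a"
proof -
  assume a: "a \<in> hom C X Y"
  have na: "ngt C a \<in> hom C X Y" using ngt_hom[OF a] .
  have "adr C (ngt C a) a = zro C X Y" using adr_comm[OF na a] adr_ngt[OF a] by simp
  then show ?thesis using ngt_uniq[OF na a] by simp
qed
lemma ngt_zro: "ngt C (zro C X Y) = zro C X Y"
  using ngt_uniq[OF zro_hom zro_hom adr_zl[OF zro_hom]] by simp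
end

lemma cmp_zro_r: "is_preadditive C \<Longrightarrow> g \<in> hom C Y Z \<Longrightarrow> X \<in> obj C \<Longrightarrow>
   cmp C g (zro C X Y) = zro C X Z"
proof -
  assume P: "is_preadditive C" and g: "g \<in> hom C Y Z" and X: "X \<in> obj C"
  have c: "is_category C" using P unfolding is_preadditive_def by blast
  have Y: "Y \<in> obj C" and Z: "Z \<in> obj C" using hom_obj[OF c g] by auto
  have z: "zro C X Y \<in> hom C X Y" using zro_hom[OF P X Y] .
  have h: "cmp C g (zro C X Y) \<in> hom C X Z" using cmp_hom[OF c z g] .
  have "cmp C g (adr C (zro C X Y) (zro C X Y)) = adr C (cmp C g (zro C X Y)) (cmp C g (zro C X Y))"
    using P z g unfolding is_preadditive_def by blast
  then have "adr C (cmp C g (zro C X Y)) (cmp C g (zro C X Y)) = cmp C g (zro C X Y)"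
    using adr_zl[OF P X Y z] by simp
  then show ?thesis using cancel[OF P X Z h] by simp
qed

lemma cmp_zro_l: "is_preadditive C \<Longrightarrow> f \<in> hom C X Y \<Longrightarrow> Z \<in> obj C \<Longrightarrow>
   cmp C (zro C Y Z) f = zro C X Z"
proof -
  assume P: "is_preadditive C" and f: "f \<in> hom C X Y" and Z: "Z \<in> obj C"
  have c: "is_category C" using P unfolding is_preadditive_def by blast
  have X: "X \<in> obj C" and Y: "Y \<in> obj C" using hom_obj[OF c f] by auto
  have z: "zro C Y Z \<in> hom C Y Z" using zro_hom[OF P Y Z] .
  have h: "cmp C (zro C Y Z) f \<in> hom C X Z" using cmp_hom[OF c f z] .
  have "cmp C (adr C (zro C Y Z) (zro C Y Z)) f = adr C (cmp C (zro C Y Z) f) (cmp C (zro C Y Z) f)"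
    using P z f unfolding is_preadditive_def by blast
  then have "adr C (cmp C (zro C Y Z) f) (cmp C (zro C Y Z) f) = cmp C (zro C Y Z) f"
    using adr_zl[OF P Y Z z] by simp
  then show ?thesis using cancel[OF P X Z h] by simp
qed

lemma cmp_ngt_l: "is_preadditive C \<Longrightarrow> f \<in> hom C X Y \<Longrightarrow> g \<in> hom C Y Z \<Longrightarrow>
   cmp C (ngt C g) f = ngt C (cmp C g f)"
proof -
  assume P: "is_preadditive C" and f: "f \<in> hom C X Y" and g: "g \<in> hom C Y Z"
  have c: "is_category C" using P unfolding is_preadditive_def by blast
  have X: "X \<in> obj C" and Y: "Y \<in> obj C" and Z: "Z \<in> obj C" using hom_obj[OF c f] hom_obj[OF c g] by auto
  have ng: "ngt C g \<in> hom C Y Z" using ngt_hom[OF P Y Z g] .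
  have "cmp C (adr C g (ngt C g)) f = adr C (cmp C g f) (cmp C (ngt C g) f)"
    using P f g ng unfolding is_preadditive_def by blast
  then have "adr C (cmp C g f) (cmp C (ngt C g) f) = zro C X Z"
    using adr_ngt[OF P Y Z g] cmp_zro_l[OF P f Z] by simp
  then show ?thesis using ngt_uniq[OF P X Z] cmp_hom[OF c f g] cmp_hom[OF c f ng] by blast
qed


lemma cmp_ngt_r: "is_preadditive C \<Longrightarrow> f \<in> hom C X Y \<Longrightarrow> g \<in> hom C Y Z \<Longrightarrow>
   cmp C g (ngt C f) = ngt C (cmp C g f)"
proof -
  assume P: "is_preadditive C" and f: "f \<in> hom C X Y" and g: "g \<in> hom C Y Z"
  have c: "is_category C" using P unfolding is_preadditive_def by blast
  have X: "X \<in> obj C" and Y: "Y \<in> obj C" and Z: "Z \<in> obj C" using hom_obj[OF c f] hom_obj[OF c g] by auto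
  have nf: "ngt C f \<in> hom C X Y" using ngt_hom[OF P X Y f] .
  have "cmp C g (adr C f (ngt C f)) = adr C (cmp C g f) (cmp C g (ngt C f))"
    using pa_bil[OF P] f g nf by blast
  then have "adr C (cmp C g f) (cmp C g (ngt C f)) = zro C X Z"
    using adr_ngt[OF P X Y f] cmp_zro_r[OF P g X] by simp
  then show ?thesis using ngt_uniq[OF P X Z] cmp_hom[OF c f g] cmp_hom[OF c nf g] by blast
qed

lemma sh_D:
  assumes "shift_ok C"
  shows "bij_betw (sh_o C) (obj C) (obj C) \<and>
     (\<forall>X\<in>obj C. \<forall>Y\<in>obj C. bij_betw (sh_a C) (hom C X Y) (hom C (sh_o C X) (sh_o C Y))) \<and>
     (\<forall>X\<in>obj C. sh_a C (idn C X) = idn C (sh_o C X)) \<and>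
     (\<forall>X Y Z f g. f \<in> hom C X Y \<longrightarrow> g \<in> hom C Y Z \<longrightarrow>
        sh_a C (cmp C g f) = cmp C (sh_a C g) (sh_a C f)) \<and>
     (\<forall>X Y f g. f \<in> hom C X Y \<longrightarrow> g \<in> hom C X Y \<longrightarrow>
        sh_a C (adr C f g) = adr C (sh_a C f) (sh_a C g))"
  using assms unfolding shift_ok_def .

lemma sh_bij: "shift_ok C \<Longrightarrow> X \<in> obj C \<Longrightarrow> Y \<in> obj C \<Longrightarrow>
   bij_betw (sh_a C) (hom C X Y) (hom C (sh_o C X) (sh_o C Y))"
  using sh_D by blast
lemma sh_hom: "shift_ok C \<Longrightarrow> X \<in> obj C \<Longrightarrow> Y \<in> obj C \<Longrightarrow> f \<in> hom C X Y \<Longrightarrow>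
   sh_a C f \<in> hom C (sh_o C X) (sh_o C Y)"
  using sh_bij bij_betw_apply by metis
lemma sh_surj: "shift_ok C \<Longrightarrow> X \<in> obj C \<Longrightarrow> Y \<in> obj C \<Longrightarrow> g \<in> hom C (sh_o C X) (sh_o C Y) \<Longrightarrow>
   \<exists>f\<in>hom C X Y. g = sh_a C f"
  using sh_bij[of C X Y] unfolding bij_betw_def by blast
lemma sh_inj: "shift_ok C \<Longrightarrow> X \<in> obj C \<Longrightarrow> Y \<in> obj C \<Longrightarrow> f \<in> hom C X Y \<Longrightarrow> g \<in> hom C X Y \<Longrightarrow>
   sh_a C f = sh_a C g \<Longrightarrow> f = g"
  using sh_bij[of C X Y] unfolding bij_betw_def inj_on_def by blast
lemma sh_obj: "shift_ok C \<Longrightarrow> X \<in> obj C \<Longrightarrow> sh_o C X \<in> obj C"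
  using sh_D bij_betw_apply by metis
lemma sh_obj_surj: "shift_ok C \<Longrightarrow> Z \<in> obj C \<Longrightarrow> \<exists>W\<in>obj C. Z = sh_o C W"
  using sh_D[of C] unfolding bij_betw_def by blast
lemma sh_idn: "shift_ok C \<Longrightarrow> X \<in> obj C \<Longrightarrow> sh_a C (idn C X) = idn C (sh_o C X)"
  using sh_D by blast
lemma sh_cmp: "shift_ok C \<Longrightarrow> f \<in> hom C X Y \<Longrightarrow> g \<in> hom C Y Z \<Longrightarrow>
        sh_a C (cmp C g f) = cmp C (sh_a C g) (sh_a C f)"
  using sh_D by blast
lemma sh_adr: "shift_ok C \<Longrightarrow> f \<in> hom C X Y \<Longrightarrow> g \<in> hom C X Y \<Longrightarrow>
        sh_a C (adr C f g) = adr C (sh_a C f) (sh_a C g)"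
  using sh_D by blast

lemma pa_of: "is_triangulated C \<Longrightarrow> is_preadditive C"
  unfolding is_triangulated_def is_additive_def by (elim conjE)
lemma cat_of: "is_triangulated C \<Longrightarrow> is_category C"
  using pa_of pa_cat by blast
lemma sh_of: "is_triangulated C \<Longrightarrow> shift_ok C"
  unfolding is_triangulated_def by (elim conjE)
lemma zex_of: "is_triangulated C \<Longrightarrow> \<exists>Z. zero_obj C Z"
  unfolding is_triangulated_def is_additive_def by (elim conjE)

lemma sh_zro: "is_triangulated C \<Longrightarrow> X \<in> obj C \<Longrightarrow> Y \<in> obj C \<Longrightarrow>
   sh_a C (zro C X Y) = zro C (sh_o C X) (sh_o C Y)"
proof -
  assume T: "is_triangulated C" and X: "X \<in> obj C" and Y: "Y \<in> obj C"
  have P: "is_preadditive C" using pa_of[OF T] . have S: "shift_ok C" using sh_of[OF T] .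
  have z: "zro C X Y \<in> hom C X Y" using zro_hom[OF P X Y] .
  have h: "sh_a C (zro C X Y) \<in> hom C (sh_o C X) (sh_o C Y)" using sh_hom[OF S X Y z] .
  have "sh_a C (adr C (zro C X Y) (zro C X Y)) = adr C (sh_a C (zro C X Y)) (sh_a C (zro C X Y))"
    using sh_adr[OF S z z] .
  then show ?thesis using adr_zl[OF P X Y z] cancel[OF P sh_obj[OF S X] sh_obj[OF S Y] h] by simp
qed

lemma sh_ngt: "is_triangulated C \<Longrightarrow> f \<in> hom C X Y \<Longrightarrow>
   sh_a C (ngt C f) = ngt C (sh_a C f)"
proof -
  assume T: "is_triangulated C" and f: "f \<in> hom C X Y"
  have P: "is_preadditive C" using pa_of[OF T] . have S: "shift_ok C" using sh_of[OF T] .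
  have c: "is_category C" using cat_of[OF T] .
  have X: "X \<in> obj C" and Y: "Y \<in> obj C" using hom_obj[OF c f] by auto
  have nf: "ngt C f \<in> hom C X Y" using ngt_hom[OF P X Y f] .
  have "sh_a C (adr C f (ngt C f)) = adr C (sh_a C f) (sh_a C (ngt C f))"
    using sh_adr[OF S f nf] .
  then have "adr C (sh_a C f) (sh_a C (ngt C f)) = zro C (sh_o C X) (sh_o C Y)"
    using adr_ngt[OF P X Y f] sh_zro[OF T X Y] by simp
  then show ?thesis using ngt_uniq[OF P sh_obj[OF S X] sh_obj[OF S Y]] sh_hom[OF S X Y f] sh_hom[OF S X Y nf] by blast
qed

lemma T_tri: "is_triangulated C \<Longrightarrow> (X,Y,Z,u,v,w) \<in> dtri C \<Longrightarrow> is_tri C X Y Z u v w"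
proof -
  assume "is_triangulated C" "(X,Y,Z,u,v,w) \<in> dtri C"
  moreover have "\<forall>X Y Z u v w. (X,Y,Z,u,v,w) \<in> dtri C \<longrightarrow> is_tri C X Y Z u v w"
    using \<open>is_triangulated C\<close> unfolding is_triangulated_def by (elim conjE)
  ultimately show ?thesis by blast
qed
lemma T_zero: "is_triangulated C \<Longrightarrow> X \<in> obj C \<Longrightarrow> zero_obj C Z \<Longrightarrow>
   (X, X, Z, idn C X, zro C X Z, zro C Z (sh_o C X)) \<in> dtri C"
proof -
  assume a: "is_triangulated C" "X \<in> obj C" "zero_obj C Z"
  have "\<forall>X\<in>obj C. \<forall>Z. zero_obj C Z \<longrightarrow>
        (X, X, Z, idn C X, zro C X Z, zro C Z (sh_o C X)) \<in> dtri C"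
    using a(1) unfolding is_triangulated_def by (elim conjE)
  then show ?thesis using a by blast
qed
lemma T_ex: "is_triangulated C \<Longrightarrow> u \<in> hom C X Y \<Longrightarrow> \<exists>Z v w. (X,Y,Z,u,v,w) \<in> dtri C"
proof -
  assume a: "is_triangulated C" "u \<in> hom C X Y"
  have "\<forall>X Y u. X \<in> obj C \<longrightarrow> Y \<in> obj C \<longrightarrow> u \<in> hom C X Y \<longrightarrow>
        (\<exists>Z v w. (X,Y,Z,u,v,w) \<in> dtri C)"
    using a(1) unfolding is_triangulated_def by (elim conjE)
  then show ?thesis using a hom_obj[OF cat_of[OF a(1)] a(2)] by blast
qed
lemma T_rot: "is_triangulated C \<Longrightarrow> is_tri C X Y Z u v w \<Longrightarrow>
        ((X,Y,Z,u,v,w) \<in> dtri C \<longleftrightarrow> (Y, Z, sh_o C X, v, w, ngt C (sh_a C u)) \<in> dtri C)"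
proof -
  assume a: "is_triangulated C" "is_tri C X Y Z u v w"
  have "\<forall>X Y Z u v w. is_tri C X Y Z u v w \<longrightarrow>
        ((X,Y,Z,u,v,w) \<in> dtri C \<longleftrightarrow> (Y, Z, sh_o C X, v, w, ngt C (sh_a C u)) \<in> dtri C)"
    using a(1) unfolding is_triangulated_def by (elim conjE)
  then show ?thesis using a by blast
qed
lemma T_3: "is_triangulated C \<Longrightarrow>
        (X,Y,Z,u,v,w) \<in> dtri C \<Longrightarrow> (X',Y',Z',u',v',w') \<in> dtri C \<Longrightarrow>
        a \<in> hom C X X' \<Longrightarrow> b \<in> hom C Y Y' \<Longrightarrow> cmp C u' a = cmp C b u \<Longrightarrow>
        (\<exists>c. tri_morph C X Y Z u v w X' Y' Z' u' v' w' a b c)"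
proof -
  assume a: "is_triangulated C" "(X,Y,Z,u,v,w) \<in> dtri C" "(X',Y',Z',u',v',w') \<in> dtri C"
        "a \<in> hom C X X'" "b \<in> hom C Y Y'" "cmp C u' a = cmp C b u"
  have "\<forall>X Y Z u v w X' Y' Z' u' v' w' a b.
        (X,Y,Z,u,v,w) \<in> dtri C \<longrightarrow> (X',Y',Z',u',v',w') \<in> dtri C \<longrightarrow>
        a \<in> hom C X X' \<longrightarrow> b \<in> hom C Y Y' \<longrightarrow> cmp C u' a = cmp C b u \<longrightarrow>
        (\<exists>c. tri_morph C X Y Z u v w X' Y' Z' u' v' w' a b c)"
    using a(1) unfolding is_triangulated_def by (elim conjE)
  then show ?thesis using a by blast
qed

lemma tri_D: "is_tri C X Y Z u v w \<Longrightarrow> X \<in> obj C \<and> Y \<in> obj C \<and> Z \<in> obj C \<and>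
     u \<in> hom C X Y \<and> v \<in> hom C Y Z \<and> w \<in> hom C Z (sh_o C X)"
  unfolding is_tri_def .

lemma L1:
  assumes T: "is_triangulated C" and d: "(X,Y,Z,u,v,w) \<in> dtri C"
  shows "cmp C v u = zro C X Z"
proof -
  have P: "is_preadditive C" using pa_of[OF T] .
  have c: "is_category C" using cat_of[OF T] .
  have t: "X \<in> obj C" "Y \<in> obj C" "Z \<in> obj C" "u \<in> hom C X Y" "v \<in> hom C Y Z"
    using tri_D[OF T_tri[OF T d]] by auto
  obtain Z0 where z0: "zero_obj C Z0" using zex_of[OF T] by blast
  have d0: "(X, X, Z0, idn C X, zro C X Z0, zro C Z0 (sh_o C X)) \<in> dtri C"
    using T_zero[OF T t(1) z0] .
  obtain cc where m: "tri_morph C X X Z0 (idn C X) (zro C X Z0) (zro C Z0 (sh_o C X)) X Y Z u v w (idn C X) u cc"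
    using T_3[OF T d0 d idn_hom[OF c t(1)] t(4)] by blast
  have cc: "cc \<in> hom C Z0 Z" and e: "cmp C v u = cmp C cc (zro C X Z0)"
    using m unfolding tri_morph_def by auto
  show ?thesis using e cmp_zro_r[OF P cc t(1)] by simp
qed

lemma BR:
  assumes T: "is_triangulated C" and d: "(X,Y,Z,u,v,w) \<in> dtri C"
  shows "\<exists>W w0. W \<in> obj C \<and> w0 \<in> hom C W X \<and> Z = sh_o C W \<and> (W,X,Y,w0,u,v) \<in> dtri C"
proof -
  have P: "is_preadditive C" using pa_of[OF T] .
  have S: "shift_ok C" using sh_of[OF T] .
  have t: "X \<in> obj C" "Y \<in> obj C" "Z \<in> obj C" "u \<in> hom C X Y" "v \<in> hom C Y Z" "w \<in> hom C Z (sh_o C X)"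
    using tri_D[OF T_tri[OF T d]] by auto
  obtain W where W: "W \<in> obj C" "Z = sh_o C W" using sh_obj_surj[OF S t(3)] by blast
  obtain w1 where w1: "w1 \<in> hom C W X" "w = sh_a C w1" using sh_surj[OF S W(1) t(1)] t(6) W(2) by blast
  have nw: "ngt C w1 \<in> hom C W X" using ngt_hom[OF P W(1) t(1) w1(1)] .
  have it: "is_tri C W X Y (ngt C w1) u v" unfolding is_tri_def using W t nw by auto
  have "ngt C (sh_a C (ngt C w1)) = w"
    using sh_ngt[OF T w1(1)] ngt_ngt[OF P sh_obj[OF S W(1)] sh_obj[OF S t(1)] sh_hom[OF S W(1) t(1) w1(1)]] w1(2)
    by simp
  then have "(W,X,Y,ngt C w1,u,v) \<in> dtri C" using T_rot[OF T it] d W(2) by simp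
  then show ?thesis using W nw by blast
qed

lemma E1:
  assumes T: "is_triangulated C" and d: "(X,Y,Z,u,v,w) \<in> dtri C"
    and tt: "t \<in> hom C Y R" and tu: "cmp C t u = zro C X R"
  shows "\<exists>c\<in>hom C Z R. t = cmp C c v"
proof -
  have P: "is_preadditive C" using pa_of[OF T] .
  have c: "is_category C" using cat_of[OF T] .
  have t: "X \<in> obj C" "Y \<in> obj C" "Z \<in> obj C" "u \<in> hom C X Y" "v \<in> hom C Y Z"
    using tri_D[OF T_tri[OF T d]] by auto
  have R: "R \<in> obj C" using hom_obj[OF c tt] by auto
  obtain Z0 where z0: "zero_obj C Z0" using zex_of[OF T] by blast
  have d0: "(R, R, Z0, idn C R, zro C R Z0, zro C Z0 (sh_o C R)) \<in> dtri C"
    using T_zero[OF T R z0] .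
  obtain W w0 where W: "W \<in> obj C" "w0 \<in> hom C W R" "(W,R,R,w0,idn C R,zro C R Z0) \<in> dtri C"
    using BR[OF T d0] by blast
  have za: "zro C X W \<in> hom C X W" using zro_hom[OF P t(1) W(1)] .
  have "cmp C w0 (zro C X W) = cmp C t u" using cmp_zro_r[OF P W(2) t(1)] tu by simp
  then obtain cc where m: "tri_morph C X Y Z u v w W R R w0 (idn C R) (zro C R Z0) (zro C X W) t cc"
    using T_3[OF T d W(3) za tt] by blast
  have cc: "cc \<in> hom C Z R" and e: "cmp C (idn C R) t = cmp C cc v"
    using m unfolding tri_morph_def by auto
  show ?thesis using cc e idn_l[OF c tt] by auto
qed

lemma E2:
  assumes T: "is_triangulated C" and d: "(X,Y,Z,u,v,w) \<in> dtri C"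
    and tt: "t \<in> hom C R Y" and tv: "cmp C v t = zro C R Z"
  shows "\<exists>a\<in>hom C R X. t = cmp C u a"
proof -
  have P: "is_preadditive C" using pa_of[OF T] .
  have c: "is_category C" using cat_of[OF T] .
  have S: "shift_ok C" using sh_of[OF T] .
  have t: "X \<in> obj C" "Y \<in> obj C" "Z \<in> obj C" "u \<in> hom C X Y" "v \<in> hom C Y Z" "w \<in> hom C Z (sh_o C X)"
    using tri_D[OF T_tri[OF T d]] by auto
  have R: "R \<in> obj C" using hom_obj[OF c tt] by auto
  obtain Z0 where z0: "zero_obj C Z0" using zex_of[OF T] by blast
  have Z0: "Z0 \<in> obj C" using z0 unfolding zero_obj_def by blast
  have d0: "(R, R, Z0, idn C R, zro C R Z0, zro C Z0 (sh_o C R)) \<in> dtri C"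
    using T_zero[OF T R z0] .
  have it0: "is_tri C R R Z0 (idn C R) (zro C R Z0) (zro C Z0 (sh_o C R))"
    using T_tri[OF T d0] .
  have r0: "(R, Z0, sh_o C R, zro C R Z0, zro C Z0 (sh_o C R), ngt C (sh_a C (idn C R))) \<in> dtri C"
    using T_rot[OF T it0] d0 by blast
  have r: "(Y, Z, sh_o C X, v, w, ngt C (sh_a C u)) \<in> dtri C"
    using T_rot[OF T T_tri[OF T d]] d by blast
  have zb: "zro C Z0 Z \<in> hom C Z0 Z" using zro_hom[OF P Z0 t(3)] .
  have "cmp C v t = cmp C (zro C Z0 Z) (zro C R Z0)"
    using tv cmp_zro_r[OF P zb R] by simp
  then obtain cc where m: "tri_morph C R Z0 (sh_o C R) (zro C R Z0) (zro C Z0 (sh_o C R)) (ngt C (sh_a C (idn C R)))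
      Y Z (sh_o C X) v w (ngt C (sh_a C u)) t (zro C Z0 Z) cc"
    using T_3[OF T r0 r tt zb] by blast
  have cc: "cc \<in> hom C (sh_o C R) (sh_o C X)" and
    e: "cmp C (ngt C (sh_a C u)) cc = cmp C (sh_a C t) (ngt C (sh_a C (idn C R)))"
    using m unfolding tri_morph_def by auto
  obtain a where a: "a \<in> hom C R X" "cc = sh_a C a" using sh_surj[OF S R t(1) cc] by blast
  have SR: "sh_o C R \<in> obj C" and SX: "sh_o C X \<in> obj C" and SY: "sh_o C Y \<in> obj C"
    using sh_obj[OF S] R t by auto
  have shu: "sh_a C u \<in> hom C (sh_o C X) (sh_o C Y)" using sh_hom[OF S t(1) t(2) t(4)] .
  have sht: "sh_a C t \<in> hom C (sh_o C R) (sh_o C Y)" using sh_hom[OF S R t(2) tt] .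
  have ua: "cmp C u a \<in> hom C R Y" using cmp_hom[OF c a(1) t(4)] .
  have "cmp C (ngt C (sh_a C u)) cc = ngt C (sh_a C (cmp C u a))"
    using cmp_ngt_l[OF P cc shu] a(2) sh_cmp[OF S a(1) t(4)] by simp
  moreover have "cmp C (sh_a C t) (ngt C (sh_a C (idn C R))) = ngt C (sh_a C t)"
    using sh_idn[OF S R] cmp_ngt_r[OF P idn_hom[OF c SR] sht] idn_r[OF c sht] by simp
  ultimately have "ngt C (sh_a C (cmp C u a)) = ngt C (sh_a C t)" using e by simp
  then have "ngt C (ngt C (sh_a C (cmp C u a))) = ngt C (ngt C (sh_a C t))" by simp
  then have "sh_a C (cmp C u a) = sh_a C t"
    using ngt_ngt[OF P SR SY sht] ngt_ngt[OF P SR SY sh_hom[OF S R t(2) ua]] by simp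
  then have "cmp C u a = t" using sh_inj[OF S R t(2) ua tt] by blast
  then show ?thesis using a(1) by blast
qed

lemma Ziso:
  assumes T: "is_triangulated C" and d: "(X,X,K,idn C X,p,q) \<in> dtri C"
  shows "zero_obj C K"
proof -
  have P: "is_preadditive C" using pa_of[OF T] .
  have c: "is_category C" using cat_of[OF T] .
  have S: "shift_ok C" using sh_of[OF T] .
  have it: "is_tri C X X K (idn C X) p q" using T_tri[OF T d] .
  have t: "X \<in> obj C" "K \<in> obj C" "p \<in> hom C X K" "q \<in> hom C K (sh_o C X)"
    using tri_D[OF it] by auto
  have SX: "sh_o C X \<in> obj C" using sh_obj[OF S t(1)] .
  have p0: "p = zro C X K" using L1[OF T d] idn_r[OF c t(3)] by simp
  have r1: "(X, K, sh_o C X, p, q, ngt C (sh_a C (idn C X))) \<in> dtri C"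
    using T_rot[OF T it] d by blast
  have r2: "(K, sh_o C X, sh_o C X, q, ngt C (sh_a C (idn C X)), ngt C (sh_a C p)) \<in> dtri C"
    using T_rot[OF T T_tri[OF T r1]] r1 by blast
  have "cmp C (ngt C (sh_a C (idn C X))) q = zro C K (sh_o C X)" using L1[OF T r2] .
  moreover have "cmp C (ngt C (sh_a C (idn C X))) q = ngt C q"
    using sh_idn[OF S t(1)] cmp_ngt_l[OF P t(4) idn_hom[OF c SX]] idn_l[OF c t(4)] by simp
  ultimately have "ngt C q = zro C K (sh_o C X)" by simp
  then have q0: "q = zro C K (sh_o C X)"
    using ngt_ngt[OF P t(2) SX t(4)] ngt_zro[OF P t(2) SX] by metis
  have iK: "idn C K \<in> hom C K K" using idn_hom[OF c t(2)] .
  have "cmp C q (idn C K) = zro C K (sh_o C X)" using idn_r[OF c t(4)] q0 by simp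
  then obtain a where a: "a \<in> hom C K X" "idn C K = cmp C p a" using E2[OF T r1 iK] by blast
  have iz: "idn C K = zro C K K" using a cmp_zro_l[OF P a(1) t(2)] p0 by simp
  show ?thesis unfolding zero_obj_def
  proof (intro conjI ballI t(2))
    fix Y assume Y: "Y \<in> obj C"
    have h1: "f = zro C Y K" if f: "f \<in> hom C Y K" for f
      using idn_l[OF c f] iz cmp_zro_l[OF P f t(2)] by simp
    have h2: "f = zro C K Y" if f: "f \<in> hom C K Y" for f
      using idn_r[OF c f] iz cmp_zro_r[OF P f t(2)] by simp
    show "\<exists>!f. f \<in> hom C Y K" using h1 zro_hom[OF P Y t(2)] by blast
    show "\<exists>!f. f \<in> hom C K Y" using h2 zro_hom[OF P t(2) Y] by blast
  qed
qed

lemma func_D: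
  assumes "is_triangle_functor A B Fo Fm xi"
  shows "(\<forall>X\<in>obj A. Fo X \<in> obj B) \<and>
     (\<forall>X Y f. f \<in> hom A X Y \<longrightarrow> Fm f \<in> hom B (Fo X) (Fo Y)) \<and>
     (\<forall>X\<in>obj A. Fm (idn A X) = idn B (Fo X)) \<and>
     (\<forall>X Y Z f g. f \<in> hom A X Y \<longrightarrow> g \<in> hom A Y Z \<longrightarrow>
        Fm (cmp A g f) = cmp B (Fm g) (Fm f)) \<and>
     (\<forall>X Y f g. f \<in> hom A X Y \<longrightarrow> g \<in> hom A X Y \<longrightarrow>
        Fm (adr A f g) = adr B (Fm f) (Fm g)) \<and>
     (\<forall>X\<in>obj A. is_iso B (Fo (sh_o A X)) (sh_o B (Fo X)) (xi X)) \<and>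
     (\<forall>X Y f. f \<in> hom A X Y \<longrightarrow>
        cmp B (xi Y) (Fm (sh_a A f)) = cmp B (sh_a B (Fm f)) (xi X)) \<and>
     (\<forall>X Y Z u v w. (X,Y,Z,u,v,w) \<in> dtri A \<longrightarrow>
        (Fo X, Fo Y, Fo Z, Fm u, Fm v, cmp B (xi X) (Fm w)) \<in> dtri B)"
  using assms unfolding is_triangle_functor_def .

theorem mainTheorem9:
  fixes A :: "('o1,'m1) tricat" and B :: "('o2,'m2) tricat"
    and Fo :: "'o1 \<Rightarrow> 'o2" and Fm :: "'m1 \<Rightarrow> 'm2" and xi :: "'o1 \<Rightarrow> 'm2"
  assumes "is_triangulated A" and "is_triangulated B"
    and "is_triangle_functor A B Fo Fm xi"
    and "is_full A B Fo Fm"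
  shows "is_objective A B Fo Fm"
proof -
  note TA = assms(1) and TB = assms(2)
  have cA: "is_category A" using cat_of[OF TA] .
  have cB: "is_category B" using cat_of[OF TB] .
  have PA: "is_preadditive A" using pa_of[OF TA] .
  have Fh: "\<And>X Y f. f \<in> hom A X Y \<Longrightarrow> Fm f \<in> hom B (Fo X) (Fo Y)"
    using func_D[OF assms(3)] by auto
  have Fc: "\<And>X Y Z f g. f \<in> hom A X Y \<Longrightarrow> g \<in> hom A Y Z \<Longrightarrow> Fm (cmp A g f) = cmp B (Fm g) (Fm f)"
    using func_D[OF assms(3)] by auto
  have Fo: "\<And>X. X \<in> obj A \<Longrightarrow> Fo X \<in> obj B"
    using func_D[OF assms(3)] by auto
  have Fd: "\<And>X Y Z u v w. (X,Y,Z,u,v,w) \<in> dtri A \<Longrightarrow>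
        (Fo X, Fo Y, Fo Z, Fm u, Fm v, cmp B (xi X) (Fm w)) \<in> dtri B"
    using func_D[OF assms(3)] by auto
  have full: "\<And>X Y g. X \<in> obj A \<Longrightarrow> Y \<in> obj A \<Longrightarrow> g \<in> hom B (Fo X) (Fo Y) \<Longrightarrow> \<exists>f\<in>hom A X Y. Fm f = g"
    using assms(4) unfolding is_full_def by blast
  show ?thesis unfolding is_objective_def
  proof (intro allI impI)
    fix X Y f assume f: "f \<in> hom A X Y" and Ff: "Fm f = zro B (Fo X) (Fo Y)"
    have X: "X \<in> obj A" and Y: "Y \<in> obj A" using hom_obj[OF cA f] by auto
    obtain Z g h where d: "(X,Y,Z,f,g,h) \<in> dtri A" using T_ex[OF TA f] by blast
    obtain W w0 where W: "W \<in> obj A" "w0 \<in> hom A W X" "(W,X,Y,w0,f,g) \<in> dtri A"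
      using BR[OF TA d] by blast
    have dB: "(Fo W, Fo X, Fo Y, Fm w0, Fm f, cmp B (xi W) (Fm g)) \<in> dtri B" using Fd[OF W(3)] .
    have iX: "idn B (Fo X) \<in> hom B (Fo X) (Fo X)" using idn_hom[OF cB Fo[OF X]] .
    have "cmp B (Fm f) (idn B (Fo X)) = zro B (Fo X) (Fo Y)" using idn_r[OF cB Fh[OF f]] Ff by simp
    then obtain a where a: "a \<in> hom B (Fo X) (Fo W)" "idn B (Fo X) = cmp B (Fm w0) a"
      using E2[OF TB dB iX] by blast
    obtain s where s: "s \<in> hom A X W" "Fm s = a" using full[OF X W(1) a(1)] by blast
    define e where "e = cmp A w0 s"
    have e: "e \<in> hom A X X" unfolding e_def using cmp_hom[OF cA s(1) W(2)] .
    have Fe: "Fm e = idn B (Fo X)" unfolding e_def using Fc[OF s(1) W(2)] s(2) a(2) by simp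
    have fe: "cmp A f e = zro A X Y"
    proof -
      have "cmp A f e = cmp A (cmp A f w0) s" unfolding e_def using assoc[OF cA s(1) W(2) f] .
      also have "\<dots> = cmp A (zro A W Y) s" using L1[OF TA W(3)] by simp
      also have "\<dots> = zro A X Y" using cmp_zro_l[OF PA s(1) Y] .
      finally show ?thesis .
    qed
    obtain K p q where dK: "(X,X,K,e,p,q) \<in> dtri A" using T_ex[OF TA e] by blast
    have tK: "K \<in> obj A" "p \<in> hom A X K" using tri_D[OF T_tri[OF TA dK]] by auto
    have "(Fo X, Fo X, Fo K, idn B (Fo X), Fm p, cmp B (xi X) (Fm q)) \<in> dtri B"
      using Fd[OF dK] Fe by simp
    then have zK: "zero_obj B (Fo K)" using Ziso[OF TB] by blast
    obtain b where b: "b \<in> hom A K Y" "f = cmp A b p" using E1[OF TA dK f fe] by blast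
    show "\<exists>K a b. K \<in> obj A \<and> zero_obj B (Fo K) \<and> a \<in> hom A X K \<and> b \<in> hom A K Y \<and> f = cmp A b a"
      using tK zK b by blast
  qed
qed
end
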